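(* Let $A$ be a finite set and let $v:2^A\to\mathbb{R}_{\ge 0}$ be a monotone subadditive function with $v(\emptyset)=0$. Let $S\subseteq A$ and let $k$ be a positive integer such that $v(S)\ge k\cdot v(\{i\})$ for every $i\in S$. Suppose $S$ is divided uniformly at random into two groups $T_1$ and $T_2=S\setminus T_1$ (each element of $S$ is placed into $T_1$ or $T_2$ independently with probability $\frac12$ each). Then with probability at least $\frac{1}{2}$ we have both $v(T_1)\ge \frac{k-1}{4k}v(S)$ and $v(T_2)\ge \frac{k-1}{4k}v(S)$.
   Context: Subadditive means $v(S)+v(T)\ge v(S\cup T)$ for all $S,T\subseteq A$; monotone means $v(S)\le v(T)$ whenever $S\subseteq T$. *)

theory Defs
  imports "HOL-Probability.Probability"
begin

definition monotone_set_fun :: "'a set \<Rightarrow> ('a set \<Rightarrow> real) \<Rightarrow> bool" where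
  "monotone_set_fun A v \<longleftrightarrow> (\<forall>S T. S \<subseteq> T \<and> T \<subseteq> A \<longrightarrow> v S \<le> v T)"

definition subadditive_set_fun :: "'a set \<Rightarrow> ('a set \<Rightarrow> real) \<Rightarrow> bool" where
  "subadditive_set_fun A v \<longleftrightarrow> (\<forall>S T. S \<subseteq> A \<and> T \<subseteq> A \<longrightarrow> v (S \<union> T) \<le> v S + v T)"

end

theory Submission
  imports Defs
begin

lemma half_count:
  assumes "finite R" "\<And>X. X \<subseteq> R \<Longrightarrow> P X \<Longrightarrow> \<not> P (R - X)"
  shows "2 * card {X \<in> Pow R. P X} \<le> 2 ^ card R"
proof -
  let ?A = "{X \<in> Pow R. P X}"
  have fA: "finite ?A" using assms(1) by simp
  have inj: "inj_on (\<lambda>X. R - X) ?A" by (auto simp: inj_on_def)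
  have disj: "?A \<inter> (\<lambda>X. R - X) ` ?A = {}"
  proof (rule ccontr)
    assume "?A \<inter> (\<lambda>X. R - X) ` ?A \<noteq> {}"
    then obtain X where X: "X \<subseteq> R" "P X" "P (R - X)" by auto
    then show False using assms(2) by blast
  qed
  have sub: "?A \<union> (\<lambda>X. R - X) ` ?A \<subseteq> Pow R" by auto
  have "card (?A \<union> (\<lambda>X. R - X) ` ?A) = card ?A + card ?A"
    using card_Un_disjoint[OF fA finite_imageI[OF fA] disj] card_image[OF inj] by simp
  moreover have "card (?A \<union> (\<lambda>X. R - X) ` ?A) \<le> card (Pow R)"
    using card_mono[OF _ sub] assms(1) by simp
  ultimately show ?thesis using card_Pow[of R] assms(1) by simp
qed

lemma prod_count:
  assumes "finite S1" "finite S2" "S1 \<inter> S2 = {}"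
  shows "card {T \<in> Pow (S1 \<union> S2). P (T \<inter> S1) \<and> Q (T \<inter> S2)}
       = card {X \<in> Pow S1. P X} * card {Y \<in> Pow S2. Q Y}"
proof -
  have "bij_betw (\<lambda>(X,Y). X \<union> Y) ({X \<in> Pow S1. P X} \<times> {Y \<in> Pow S2. Q Y})
          {T \<in> Pow (S1 \<union> S2). P (T \<inter> S1) \<and> Q (T \<inter> S2)}"
    unfolding bij_betw_def
  proof (intro conjI)
    show "inj_on (\<lambda>(X,Y). X \<union> Y) ({X \<in> Pow S1. P X} \<times> {Y \<in> Pow S2. Q Y})"
    proof (rule inj_onI, clarify)
      fix X Y X' Y' assume h: "X \<union> Y = X' \<union> Y'" "X \<subseteq> S1" "Y \<subseteq> S2" "X' \<subseteq> S1" "Y' \<subseteq> S2"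
      have "X = (X \<union> Y) \<inter> S1" "X' = (X' \<union> Y') \<inter> S1" "Y = (X \<union> Y) \<inter> S2" "Y' = (X' \<union> Y') \<inter> S2"
        using h assms(3) by auto
      then show "X = X' \<and> Y = Y'" using h(1) by metis
    qed
    show "(\<lambda>(X,Y). X \<union> Y) ` ({X \<in> Pow S1. P X} \<times> {Y \<in> Pow S2. Q Y})
          = {T \<in> Pow (S1 \<union> S2). P (T \<inter> S1) \<and> Q (T \<inter> S2)}"
    proof (rule set_eqI, rule iffI)
      fix T assume "T \<in> (\<lambda>(X,Y). X \<union> Y) ` ({X \<in> Pow S1. P X} \<times> {Y \<in> Pow S2. Q Y})"
      then obtain X Y where h: "T = X \<union> Y" "X \<subseteq> S1" "Y \<subseteq> S2" "P X" "Q Y" by auto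
      have "T \<inter> S1 = X" "T \<inter> S2 = Y" using h assms(3) by auto
      then show "T \<in> {T \<in> Pow (S1 \<union> S2). P (T \<inter> S1) \<and> Q (T \<inter> S2)}" using h by auto
    next
      fix T assume h: "T \<in> {T \<in> Pow (S1 \<union> S2). P (T \<inter> S1) \<and> Q (T \<inter> S2)}"
      then have eqT: "T = (\<lambda>(X,Y). X \<union> Y) (T \<inter> S1, T \<inter> S2)" by auto
      have mem: "(T \<inter> S1, T \<inter> S2) \<in> {X \<in> Pow S1. P X} \<times> {Y \<in> Pow S2. Q Y}"
        using h by simp
      show "T \<in> (\<lambda>(X,Y). X \<union> Y) ` ({X \<in> Pow S1. P X} \<times> {Y \<in> Pow S2. Q Y})"
        by (rule image_eqI[where f="\<lambda>(X,Y). X \<union> Y", OF eqT mem])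
    qed
  qed
  from bij_betw_same_card[OF this] show ?thesis by (simp add: card_cartesian_product)
qed

lemma four_le:
  fixes x a b p q :: nat
  assumes "x \<le> a * b" "2 * a \<le> p" "2 * b \<le> q"
  shows "4 * x \<le> p * q"
proof -
  have "4 * x \<le> (2 * a) * (2 * b)" using assms(1) by simp
  also have "\<dots> \<le> p * q" using assms(2,3) by (rule mult_le_mono)
  finally show ?thesis .
qed

theorem lemma2p1:
  fixes A :: "'a set" and v :: "'a set \<Rightarrow> real" and S :: "'a set" and k :: nat
  assumes "finite A"
    and "\<forall>T. T \<subseteq> A \<longrightarrow> v T \<ge> 0"
    and "monotone_set_fun A v"
    and "subadditive_set_fun A v"
    and "v {} = 0"
    and "S \<subseteq> A"
    and "k > 0"
    and "\<forall>i\<in>S. v S \<ge> real k * v {i}"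
  shows "measure_pmf.prob (pmf_of_set (Pow S))
           {T1. v T1 \<ge> (real k - 1) / (4 * real k) * v S \<and>
                v (S - T1) \<ge> (real k - 1) / (4 * real k) * v S} \<ge> 1 / 2"
proof -
  define V where "V = v S"
  define c where "c = (real k - 1) / (4 * real k)"
  define w where "w = c * V"
  have finS: "finite S" using assms(1,6) finite_subset by blast
  have k1: "real k \<ge> 1" using assms(7) by simp
  have V0: "0 \<le> V" using assms(2,6) V_def by auto
  have c0: "0 \<le> c" using k1 by (simp add: c_def)
  have cid: "4 * c + 1 / real k = 1" using k1 by (simp add: c_def field_simps)
  have w0: "0 \<le> w" using c0 V0 w_def by simp
  have wid: "4 * w + V / real k = V"
  proof -
    have "V * (4 * c + 1 / real k) = V" using cid by simp
    then show ?thesis unfolding w_def by (simp add: algebra_simps)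
  qed
  have mono: "\<And>X Y. X \<subseteq> Y \<Longrightarrow> Y \<subseteq> A \<Longrightarrow> v X \<le> v Y"
    using assms(3) unfolding monotone_set_fun_def by blast
  have subadd: "\<And>X Y. X \<subseteq> A \<Longrightarrow> Y \<subseteq> A \<Longrightarrow> v (X \<union> Y) \<le> v X + v Y"
    using assms(4) unfolding subadditive_set_fun_def by blast
  have single: "\<And>x. x \<in> S \<Longrightarrow> v {x} \<le> V / real k"
    using assms(8) k1 by (simp add: V_def field_simps mult.commute)
  define F where "F = {Y. Y \<subseteq> S \<and> 2 * w \<le> v Y}"
  have "0 \<le> V / real k" using V0 k1 by simp
  then have "2 * w \<le> V" using wid w0 by linarith
  then have "S \<in> F" unfolding F_def V_def by simp
  moreover have "finite F" unfolding F_def using finS by simp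
  ultimately obtain S1 where S1F: "S1 \<in> F" and S1min: "\<forall>Y\<in>F. Y \<le> S1 \<longrightarrow> S1 = Y"
    using finite_has_minimal[of F] by blast
  have S1S: "S1 \<subseteq> S" and vS1ge: "2 * w \<le> v S1" using S1F F_def by auto
  have vS1le: "v S1 \<le> 2 * w + V / real k"
  proof (cases "S1 = {}")
    case True then show ?thesis using assms(5) w0 V0 k1 by simp
  next
    case False
    then obtain x where x: "x \<in> S1" by blast
    have "S1 - {x} \<notin> F" using S1min x by blast
    then have lt: "v (S1 - {x}) < 2 * w" using S1S F_def by auto
    have "S1 = (S1 - {x}) \<union> {x}" using x by auto
    then have "v S1 \<le> v (S1 - {x}) + v {x}"
      using subadd[of "S1 - {x}" "{x}"] S1S assms(6) x by auto
    then show ?thesis using lt single[of x] x S1S by auto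
  qed
  define S2 where "S2 = S - S1"
  have S2S: "S2 \<subseteq> S" and disj: "S1 \<inter> S2 = {}" and SU: "S = S1 \<union> S2"
    using S1S by (auto simp: S2_def)
  have "V \<le> v S1 + v S2" using subadd[of S1 S2] SU S1S S2S assms(6) V_def by auto
  then have vS2ge: "2 * w \<le> v S2" using vS1le wid by linarith
  have fin1: "finite S1" and fin2: "finite S2" using finS S1S S2S finite_subset by auto
  have cardS: "card S = card S1 + card S2" using SU card_Un_disjoint[OF fin1 fin2 disj] by simp
  have half1: "2 * card {X \<in> Pow R. v X < w} \<le> 2 ^ card R"
    if "R \<subseteq> S" "2 * w \<le> v R" for R
  proof (rule half_count)
    show "finite R" using that finS finite_subset by blast
    fix X assume X: "X \<subseteq> R" "v X < w"
    have RA: "R \<subseteq> A" using that assms(6) by blast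
    have "X \<union> (R - X) = R" using X by auto
    then have "v R \<le> v X + v (R - X)" using subadd[of X "R - X"] X RA by auto
    then show "\<not> v (R - X) < w" using X that by linarith
  qed
  have half2: "2 * card {X \<in> Pow R. v (R - X) < w} \<le> 2 ^ card R"
    if "R \<subseteq> S" "2 * w \<le> v R" for R
  proof (rule half_count)
    show "finite R" using that finS finite_subset by blast
    fix X assume X: "X \<subseteq> R" "v (R - X) < w"
    have RA: "R \<subseteq> A" using that assms(6) by blast
    have "X \<union> (R - X) = R" using X by auto
    then have "v R \<le> v X + v (R - X)" using subadd[of X "R - X"] X RA by auto
    moreover have eq: "R - (R - X) = X" using X by auto
    ultimately show "\<not> v (R - (R - X)) < w" using X that by (simp only: eq)
  qed
  define Bad1 where "Bad1 = {T \<in> Pow S. v T < w}"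
  define Bad2 where "Bad2 = {T \<in> Pow S. v (S - T) < w}"
  have "Bad1 \<subseteq> {T \<in> Pow (S1 \<union> S2). v (T \<inter> S1) < w \<and> v (T \<inter> S2) < w}"
  proof
    fix T assume T: "T \<in> Bad1"
    then have "T \<subseteq> S" "v T < w" by (auto simp: Bad1_def)
    moreover have "v (T \<inter> S1) \<le> v T" "v (T \<inter> S2) \<le> v T"
      using mono \<open>T \<subseteq> S\<close> assms(6) by (auto intro!: mono)
    ultimately show "T \<in> {T \<in> Pow (S1 \<union> S2). v (T \<inter> S1) < w \<and> v (T \<inter> S2) < w}"
      using SU by auto
  qed
  then have "card Bad1 \<le> card {X \<in> Pow S1. v X < w} * card {Y \<in> Pow S2. v Y < w}"
    using card_mono[of "{T \<in> Pow (S1 \<union> S2). v (T \<inter> S1) < w \<and> v (T \<inter> S2) < w}"]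
      prod_count[OF fin1 fin2 disj, of "\<lambda>X. v X < w" "\<lambda>Y. v Y < w"] fin1 fin2 by simp
  moreover have "2 * card {X \<in> Pow S1. v X < w} \<le> 2 ^ card S1"
    using half1 S1S vS1ge by blast
  moreover have "2 * card {X \<in> Pow S2. v X < w} \<le> 2 ^ card S2"
    using half1 S2S vS2ge by blast
  ultimately have b1: "4 * card Bad1 \<le> 2 ^ card S"
    unfolding cardS power_add by (rule four_le)
  have "Bad2 \<subseteq> {T \<in> Pow (S1 \<union> S2). v (S1 - T \<inter> S1) < w \<and> v (S2 - T \<inter> S2) < w}"
  proof
    fix T assume T: "T \<in> Bad2"
    then have "T \<subseteq> S" "v (S - T) < w" by (auto simp: Bad2_def)
    moreover have "v (S1 - T \<inter> S1) \<le> v (S - T)" "v (S2 - T \<inter> S2) \<le> v (S - T)"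
      using S1S S2S assms(6) by (auto intro!: mono)
    ultimately show "T \<in> {T \<in> Pow (S1 \<union> S2). v (S1 - T \<inter> S1) < w \<and> v (S2 - T \<inter> S2) < w}"
      using SU by auto
  qed
  then have "card Bad2 \<le> card {X \<in> Pow S1. v (S1 - X) < w} * card {Y \<in> Pow S2. v (S2 - Y) < w}"
    using card_mono[of "{T \<in> Pow (S1 \<union> S2). v (S1 - T \<inter> S1) < w \<and> v (S2 - T \<inter> S2) < w}"]
      prod_count[OF fin1 fin2 disj, of "\<lambda>X. v (S1 - X) < w" "\<lambda>Y. v (S2 - Y) < w"] fin1 fin2 by simp
  moreover have "2 * card {X \<in> Pow S1. v (S1 - X) < w} \<le> 2 ^ card S1"
    using half2 S1S vS1ge by blast
  moreover have "2 * card {X \<in> Pow S2. v (S2 - X) < w} \<le> 2 ^ card S2"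
    using half2 S2S vS2ge by blast
  ultimately have b2: "4 * card Bad2 \<le> 2 ^ card S"
    unfolding cardS power_add by (rule four_le)
  define G where "G = {T1. v T1 \<ge> (real k - 1) / (4 * real k) * v S \<and>
                v (S - T1) \<ge> (real k - 1) / (4 * real k) * v S}"
  have G_eq: "G = {T1. w \<le> v T1 \<and> w \<le> v (S - T1)}"
    unfolding G_def w_def c_def V_def by simp
  have "Pow S \<subseteq> (Pow S \<inter> G) \<union> Bad1 \<union> Bad2"
    unfolding G_eq Bad1_def Bad2_def by auto
  then have "card (Pow S) \<le> card ((Pow S \<inter> G) \<union> Bad1 \<union> Bad2)"
    using finS by (intro card_mono) (auto simp: Bad1_def Bad2_def)
  also have "\<dots> \<le> card (Pow S \<inter> G) + card Bad1 + card Bad2"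
    using card_Un_le[of "Pow S \<inter> G \<union> Bad1" Bad2] card_Un_le[of "Pow S \<inter> G" Bad1] by linarith
  finally have cnt: "2 ^ card S \<le> card (Pow S \<inter> G) + card Bad1 + card Bad2"
    using finS by (simp add: card_Pow)
  have "2 ^ card S \<le> 2 * card (Pow S \<inter> G)" using cnt b1 b2 by linarith
  then have r: "real (2 ^ card S) \<le> 2 * real (card (Pow S \<inter> G))" by linarith
  have "measure_pmf.prob (pmf_of_set (Pow S)) G = card (Pow S \<inter> G) / card (Pow S)"
    using measure_pmf_of_set[of "Pow S" G] finS by blast
  also have "\<dots> = card (Pow S \<inter> G) / 2 ^ card S" using finS by (simp add: card_Pow)
  finally have pe: "measure_pmf.prob (pmf_of_set (Pow S)) G = card (Pow S \<inter> G) / 2 ^ card S" .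
  have Npos: "(0::real) < 2 ^ card S" by simp
  have "real (card (Pow S \<inter> G)) / 2 ^ card S \<ge> 1 / 2"
    using r Npos by (simp add: divide_simps)
  then have "measure_pmf.prob (pmf_of_set (Pow S)) G \<ge> 1 / 2" using pe by simp
  then show ?thesis unfolding G_def .
qed

end
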